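(* Let $M$ be a locally finite uniformly discrete metric space which admits a quasi-isometric embedding into an infinite-dimensional Banach space $X$. Then $M$ admits a bilipschitz embedding into $X$.
   Context: A metric space is locally finite if every ball of finite radius has finite cardinality; it is uniformly discrete if $\inf\{d(u,v):u\ne v\}>0$. A map $f:(A,d_A)\to(B,d_B)$ is a quasi-isometric embedding if there are $a_1,a_2>0$, $b\ge 0$ with $a_1d_A(u,v)-b\le d_B(f(u),f(v))\le a_2d_A(u,v)+b$ for all $u,v\in A$. A bilipschitz embedding is a map with $c\,d_A(u,v)\le d_B(f(u),f(v))\le C\,d_A(u,v)$ for constants $0<c\le C<\infty$. *)

theory Defs
  imports "HOL-Analysis.Analysis"
begin

definition locally_finite_metric :: "'a set \<Rightarrow> ('a \<Rightarrow> 'a \<Rightarrow> real) \<Rightarrow> bool" where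
  "locally_finite_metric M d \<longleftrightarrow> (\<forall>x\<in>M. \<forall>r::real. finite {y\<in>M. d x y \<le> r})"

definition uniformly_discrete :: "'a set \<Rightarrow> ('a \<Rightarrow> 'a \<Rightarrow> real) \<Rightarrow> bool" where
  "uniformly_discrete M d \<longleftrightarrow> (\<exists>e>0. \<forall>u\<in>M. \<forall>v\<in>M. u \<noteq> v \<longrightarrow> e \<le> d u v)"

definition quasi_isometric_embedding ::
  "'a set \<Rightarrow> ('a \<Rightarrow> 'a \<Rightarrow> real) \<Rightarrow> ('a \<Rightarrow> 'b::metric_space) \<Rightarrow> bool" where
  "quasi_isometric_embedding M d f \<longleftrightarrow>
     (\<exists>a1>0. \<exists>a2>0. \<exists>b\<ge>0. \<forall>u\<in>M. \<forall>v\<in>M.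
        a1 * d u v - b \<le> dist (f u) (f v) \<and> dist (f u) (f v) \<le> a2 * d u v + b)"

definition bilipschitz_embedding ::
  "'a set \<Rightarrow> ('a \<Rightarrow> 'a \<Rightarrow> real) \<Rightarrow> ('a \<Rightarrow> 'b::metric_space) \<Rightarrow> bool" where
  "bilipschitz_embedding M d f \<longleftrightarrow>
     (\<exists>c C. 0 < c \<and> c \<le> C \<and> (\<forall>u\<in>M. \<forall>v\<in>M.
        c * d u v \<le> dist (f u) (f v) \<and> dist (f u) (f v) \<le> C * d u v))"

definition infinite_dimensional :: "'b::real_vector itself \<Rightarrow> bool" where
  "infinite_dimensional TYPE('b) \<longleftrightarrow> \<not> (\<exists>S::'b set. finite S \<and> span S = UNIV)"

end

theory Submission imports Defs begin

lemma closed_insert_aux: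
  fixes V :: "'b::real_normed_vector set"
  assumes cV: "closed V" and sV: "subspace V" and xV: "x \<notin> V"
  shows "closed {y. \<exists>t. y - t *\<^sub>R x \<in> V}"
proof -
  have ne: "V \<noteq> {}" using subspace_0[OF sV] by auto
  define \<delta> where "\<delta> = infdist x V"
  have dpos: "\<delta> > 0" unfolding \<delta>_def using infdist_pos_not_in_closed[OF cV ne xV] .
  have bnd: "\<bar>t\<bar> * \<delta> \<le> norm y" if "y - t *\<^sub>R x \<in> V" for y t
  proof (cases "t = 0")
    case True then show ?thesis by simp
  next
    case False
    have "x - (1/t) *\<^sub>R y = (- (1/t)) *\<^sub>R (y - t *\<^sub>R x)"
      using False by (simp add: algebra_simps)
    hence w: "x - (1/t) *\<^sub>R y \<in> V" using subspace_scale[OF sV that, of "- (1/t)"] by simp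
    have "\<delta> \<le> dist x (x - (1/t) *\<^sub>R y)" unfolding \<delta>_def by (rule infdist_le[OF w])
    also have "\<dots> = norm y / \<bar>t\<bar>" by (simp add: dist_norm)
    finally show ?thesis using False by (simp add: field_simps)
  qed
  show ?thesis unfolding closed_sequential_limits
  proof (intro allI impI, elim conjE)
    fix s l assume sin: "\<forall>n. s n \<in> {y. \<exists>t. y - t *\<^sub>R x \<in> V}" and lim: "s \<longlonglongrightarrow> l"
    obtain T where T: "\<And>n. s n - T n *\<^sub>R x \<in> V" using sin by simp metis
    from convergent_imp_bounded[OF lim] obtain K where K: "\<And>n. norm (s n) \<le> K"
      unfolding bounded_iff by auto
    have "\<bar>T n\<bar> \<le> K / \<delta>" for n
      using bnd[OF T[of n]] K[of n] dpos by (simp add: field_simps)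
    hence "bounded (range T)" unfolding bounded_iff by auto
    then obtain t r where r: "strict_mono r" and tl: "(T \<circ> r) \<longlonglongrightarrow> t"
      using bounded_imp_convergent_subsequence by blast
    have "(\<lambda>n. s (r n) - T (r n) *\<^sub>R x) \<longlonglongrightarrow> l - t *\<^sub>R x"
      using LIMSEQ_subseq_LIMSEQ[OF lim r] tl
      by (intro tendsto_intros) (auto simp: o_def)
    moreover have "\<forall>n. s (r n) - T (r n) *\<^sub>R x \<in> V" using T by auto
    ultimately have "l - t *\<^sub>R x \<in> V" using cV unfolding closed_sequential_limits by meson
    thus "l \<in> {y. \<exists>t. y - t *\<^sub>R x \<in> V}" by auto
  qed
qed

lemma closed_span_finite:
  fixes Q :: "'b::real_normed_vector set"
  assumes "finite Q" shows "closed (span Q)"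
  using assms
proof (induction rule: finite_induct)
  case empty then show ?case by simp
next
  case (insert a Q)
  show ?case
  proof (cases "a \<in> span Q")
    case True then show ?thesis using insert by (simp add: span_redundant)
  next
    case False
    show ?thesis unfolding span_insert
      using closed_insert_aux[OF insert.IH subspace_span False] by simp
  qed
qed

lemma avoid:
  fixes Q :: "'b::real_normed_vector set"
  assumes fin: "finite Q" and inf: "infinite_dimensional TYPE('b)"
  shows "\<exists>p. norm p \<le> 1 \<and> (\<forall>q\<in>Q. 1/2 \<le> dist p q)"
proof -
  define V where "V = span Q"
  have cV: "closed V" unfolding V_def by (rule closed_span_finite[OF fin])
  have sV: "subspace V" unfolding V_def by simp
  have "V \<noteq> UNIV" using inf fin unfolding infinite_dimensional_def V_def by blast
  then obtain x where xV: "x \<notin> V" by auto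
  have ne: "V \<noteq> {}" using subspace_0[OF sV] by auto
  define \<delta> where "\<delta> = infdist x V"
  have dpos: "\<delta> > 0" unfolding \<delta>_def using infdist_pos_not_in_closed[OF cV ne xV] .
  have "infdist x V < 2 * \<delta>" using dpos unfolding \<delta>_def by simp
  then obtain v0 where v0: "v0 \<in> V" "dist x v0 < 2 * \<delta>"
  proof -
    have "bdd_below (dist x ` V)" by (rule bdd_belowI[of _ 0]) auto
    then have "\<exists>v\<in>V. dist x v < 2 * \<delta>" using \<open>infdist x V < 2 * \<delta>\<close> ne
      unfolding infdist_def by (simp add: cINF_less_iff)
    then show ?thesis using that by blast
  qed
  define N where "N = norm (x - v0)"
  have Npos: "N > 0" unfolding N_def using v0 xV by auto
  have N2: "N < 2 * \<delta>" using v0 by (simp add: N_def dist_norm)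
  define p where "p = (1/N) *\<^sub>R (x - v0)"
  have "norm p \<le> 1" using Npos by (simp add: p_def N_def)
  moreover have "1/2 \<le> dist p q" if q: "q \<in> Q" for q
  proof -
    have qV: "q \<in> V" using q unfolding V_def by (simp add: span_base)
    have w: "v0 + N *\<^sub>R q \<in> V" using sV v0(1) qV by (simp add: subspace_add subspace_scale)
    have "\<delta> \<le> dist x (v0 + N *\<^sub>R q)" unfolding \<delta>_def by (rule infdist_le[OF w])
    also have "\<dots> = norm (N *\<^sub>R (p - q))"
      using Npos by (simp add: p_def dist_norm algebra_simps)
    also have "\<dots> = N * dist p q" using Npos by (simp add: dist_norm)
    finally have "\<delta> \<le> N * dist p q" .
    hence "N / 2 \<le> N * dist p q" using N2 by linarith
    thus ?thesis using Npos by (simp add: field_simps)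
  qed
  ultimately show ?thesis by blast
qed

theorem lemmaL:
  fixes M :: "'a set" and d :: "'a \<Rightarrow> 'a \<Rightarrow> real"
  assumes "Metric_space M d"
    and "locally_finite_metric M d"
    and "uniformly_discrete M d"
    and "infinite_dimensional TYPE('b::banach)"
    and "\<exists>f :: 'a \<Rightarrow> 'b. quasi_isometric_embedding M d f"
  shows "\<exists>g :: 'a \<Rightarrow> 'b. bilipschitz_embedding M d g"
proof (cases "M = {}")
  case True
  then show ?thesis unfolding bilipschitz_embedding_def by (intro exI[of _ "\<lambda>_. 0"] exI[of _ 1]) auto
next
  case Mne: False
  interpret Metric_space M d by fact
  obtain f :: "'a \<Rightarrow> 'b" and a1 a2 b where a1: "a1 > 0" and a2: "a2 > 0" and b: "b \<ge> 0"
    and fq: "\<And>u v. u \<in> M \<Longrightarrow> v \<in> M \<Longrightarrow> a1 * d u v - b \<le> dist (f u) (f v) \<and> dist (f u) (f v) \<le> a2 * d u v + b"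
    using assms(5) unfolding quasi_isometric_embedding_def by blast
  obtain e where e: "e > 0" and ed: "\<And>u v. u \<in> M \<Longrightarrow> v \<in> M \<Longrightarrow> u \<noteq> v \<Longrightarrow> e \<le> d u v"
    using assms(3) unfolding uniformly_discrete_def by blast
  obtain x0 where x0: "x0 \<in> M" using Mne by auto
  have Meq: "M = (\<Union>n::nat. {y\<in>M. d x0 y \<le> real n})"
  proof (intro equalityI subsetI)
    fix y assume "y \<in> M"
    moreover obtain n :: nat where "d x0 y \<le> real n" using real_arch_simple by blast
    ultimately show "y \<in> (\<Union>n::nat. {y\<in>M. d x0 y \<le> real n})" by auto
  qed auto
  have cn: "countable {y\<in>M. d x0 y \<le> real n}" for n
    using assms(2) x0 unfolding locally_finite_metric_def by (simp add: countable_finite)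
  have cM: "countable M" by (subst Meq) (intro countable_UN[OF countableI_type] cn)
  define u where "u = from_nat_into M"
  have ur: "range u = M" unfolding u_def using Mne cM by simp
  define P where "P = (\<lambda>n ys (p::'b). norm p \<le> 1 \<and> (\<forall>m<n. 1/2 \<le> dist (f (u n) + p) (f (u m) + ys ! m)))"
  have Pex: "\<exists>p. P n ys p" for n ys
  proof -
    obtain p where p: "norm p \<le> 1" "\<forall>q\<in>(\<lambda>m. f (u m) + ys ! m - f (u n)) ` {..<n}. 1/2 \<le> dist p q"
      using avoid[OF _ assms(4), of "(\<lambda>m. f (u m) + ys ! m - f (u n)) ` {..<n}"] by auto
    have "1/2 \<le> dist (f (u n) + p) (f (u m) + ys ! m)" if "m < n" for m
    proof -
      have "1/2 \<le> dist p (f (u m) + ys ! m - f (u n))" using p(2) that by auto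
      also have "\<dots> = dist (f (u n) + p) (f (u m) + ys ! m)" by (simp add: dist_norm algebra_simps)
      finally show ?thesis .
    qed
    then show ?thesis using p(1) unfolding P_def by blast
  qed
  define L where "L = rec_nat [] (\<lambda>n ys. ys @ [SOME p. P n ys p])"
  have L0: "L 0 = []" and LS: "L (Suc n) = L n @ [SOME p. P n (L n) p]" for n
    unfolding L_def by simp_all
  have lenL: "length (L n) = n" for n by (induction n) (simp_all add: L0 LS)
  define y where "y n = (SOME p. P n (L n) p)" for n
  have Py: "P n (L n) (y n)" for n unfolding y_def using Pex by (rule someI_ex)
  have Lstab: "L k ! m = y m" if "m < k" for m k
    using that
  proof (induction k)
    case 0 then show ?case by simp
  next
    case (Suc k)
    show ?case
    proof (cases "m < k")
      case True then show ?thesis using Suc by (simp add: LS nth_append lenL)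
    next
      case False then have "m = k" using Suc.prems by simp
      then show ?thesis by (simp add: LS nth_append lenL y_def)
    qed
  qed
  have ny: "norm (y n) \<le> 1" for n using Py[of n] unfolding P_def by simp
  have sep: "1/2 \<le> dist (f (u n) + y n) (f (u m) + y m)" if "m < n" for m n
    using Py[of n] that Lstab[OF that] unfolding P_def by metis
  define idx where "idx x = (LEAST n. u n = x)" for x
  have uidx: "u (idx x) = x" if "x \<in> M" for x
    unfolding idx_def using that ur by (metis (mono_tags, lifting) LeastI_ex rangeE)
  define g where "g x = f x + y (idx x)" for x
  have gsep: "1/2 \<le> dist (g x) (g z)" if "x \<in> M" "z \<in> M" "x \<noteq> z" for x z
  proof -
    have "idx x \<noteq> idx z" using uidx that by metis
    then consider "idx z < idx x" | "idx x < idx z" by linarith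
    then show ?thesis
    proof cases
      case 1 then show ?thesis using sep[OF 1] uidx that unfolding g_def by simp
    next
      case 2 then show ?thesis using sep[OF 2] uidx that unfolding g_def by (simp add: dist_commute)
    qed
  qed
  have gclose: "dist (f x) (f z) - 2 \<le> dist (g x) (g z) \<and> dist (g x) (g z) \<le> dist (f x) (f z) + 2" for x z
  proof -
    have "norm (y (idx x) - y (idx z)) \<le> 2" using ny[of "idx x"] ny[of "idx z"] norm_triangle_ineq4[of "y (idx x)" "y (idx z)"] by linarith
    moreover have "dist (g x) (g z) = norm ((f x - f z) + (y (idx x) - y (idx z)))"
      unfolding g_def by (simp add: dist_norm algebra_simps)
    moreover have "norm (A + B) \<le> norm A + norm B" "norm A - norm B \<le> norm (A + B)" for A B :: 'b
      using norm_triangle_ineq[of A B] norm_diff_ineq[of A B] by auto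
    ultimately show ?thesis unfolding dist_norm[of "f x"]
      by (smt (verit) \<open>dist (g x) (g z) = _\<close>)
  qed
  define R where "R = 2 * (b + 2) / a1"
  have Rpos: "R > 0" unfolding R_def using a1 b by simp
  define c where "c = min (a1/2) (1/(2*R))"
  define C where "C = max c (a2 + (b+2)/e)"
  have cpos: "c > 0" unfolding c_def using a1 Rpos by simp
  have "\<forall>x\<in>M. \<forall>z\<in>M. c * d x z \<le> dist (g x) (g z) \<and> dist (g x) (g z) \<le> C * d x z"
  proof (intro ballI)
    fix x z assume x: "x \<in> M" and z: "z \<in> M"
    show "c * d x z \<le> dist (g x) (g z) \<and> dist (g x) (g z) \<le> C * d x z"
    proof (cases "x = z")
      case True then show ?thesis using x by simp
    next
      case False
      have dge: "e \<le> d x z" using ed[OF x z False] .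
      have dpos: "d x z > 0" using dge e by linarith
      have fxz: "a1 * d x z - b \<le> dist (f x) (f z)" "dist (f x) (f z) \<le> a2 * d x z + b" using fq[OF x z] by auto
      have lower: "c * d x z \<le> dist (g x) (g z)"
      proof (cases "R \<le> d x z")
        case True
        have "a1 * R = 2 * (b + 2)" unfolding R_def using a1 by simp
        hence "a1 * d x z \<ge> 2 * (b+2)" using True a1 by (metis mult_left_mono less_imp_le)
        moreover have "c * d x z \<le> a1/2 * d x z" unfolding c_def using dpos by (intro mult_right_mono) auto
        moreover have "a1/2 * d x z = (a1 * d x z) / 2" by simp
        ultimately have "c * d x z \<le> a1 * d x z - b - 2" by (simp add: algebra_simps)
        also have "\<dots> \<le> dist (f x) (f z) - 2" using fxz by linarith
        also have "\<dots> \<le> dist (g x) (g z)" using gclose[of x z] by linarith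
        finally show ?thesis .
      next
        case False
        have "c * d x z \<le> 1/(2*R) * d x z" unfolding c_def using dpos by (intro mult_right_mono) auto
        also have "\<dots> \<le> 1/(2*R) * R" using False Rpos by (intro mult_left_mono) auto
        also have "\<dots> = 1/2" using Rpos by simp
        finally show ?thesis using gsep[OF x z \<open>x \<noteq> z\<close>] by linarith
      qed
      have "(b + 2) \<le> (b+2)/e * d x z"
      proof -
        have "(b+2)/e * d x z = (b+2) * (d x z / e)" by simp
        moreover have "d x z / e \<ge> 1" using dge e by simp
        ultimately show ?thesis using b by (metis mult_left_mono mult.right_neutral add_nonneg_nonneg zero_le_numeral)
      qed
      hence "dist (g x) (g z) \<le> (a2 + (b+2)/e) * d x z"
        using fxz gclose[of x z] by (simp add: algebra_simps)
      also have "\<dots> \<le> C * d x z" unfolding C_def using dpos by (intro mult_right_mono) auto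
      finally show ?thesis using lower by simp
    qed
  qed
  moreover have "c \<le> C" unfolding C_def by simp
  ultimately show ?thesis unfolding bilipschitz_embedding_def using cpos by blast
qed

end
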